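(* Let $s\in(0,1)$, $N>2s$, $2_s^*=\frac{2N}{N-2s}$, and $\Omega\subset\mathbb{R}^N$ a smooth bounded domain. On $D_0^{s,2}(\Omega)$ let $\|u\|^2=\int_{\mathbb{R}^{2N}}\frac{|u(x)-u(y)|^2}{|x-y|^{N+2s}}dxdy+|u|_2^2$. For $p\in(2,2_s^*]$ let $I_p(u)=\frac12\|u\|^2-\frac1p|u|_p^p$ and $\mathcal N_p=\{u\in D_0^{s,2}(\Omega)\setminus\{0\}:\|u\|^2=|u|_p^p\}$; set $m_p=\inf_{\mathcal N_p}I_p$ for $p<2_s^*$ and $m_*=\inf_{\mathcal N_{2_s^*}}I_{2_s^*}$. Then $$\lim_{p\to2_s^*}m_p=m_*.$$
   Context: $D_0^{s,2}(\Omega)$ is the space of functions $u\in L^{2_s^*}(\mathbb{R}^N)$ with finite Gagliardo seminorm and $u\equiv0$ outside $\Omega$; $|\cdot|_q$ is the $L^q(\Omega)$ norm. *)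

theory Defs
  imports "HOL-Analysis.Analysis"
begin

fun Ck :: "nat \<Rightarrow> ('a::euclidean_space \<Rightarrow> real) \<Rightarrow> bool" where
  "Ck 0 f = continuous_on UNIV f"
| "Ck (Suc k) f = (f differentiable_on UNIV \<and>
      (\<forall>i\<in>Basis. Ck k (\<lambda>x. frechet_derivative f (at x) i)))"

definition C_infinity :: "('a::euclidean_space \<Rightarrow> real) \<Rightarrow> bool" where
  "C_infinity f \<longleftrightarrow> (\<forall>k. Ck k f)"

definition smooth_bounded_domain :: "('a::euclidean_space) set \<Rightarrow> bool" where
  "smooth_bounded_domain \<Omega> \<longleftrightarrow> open \<Omega> \<and> connected \<Omega> \<and> bounded \<Omega> \<and> \<Omega> \<noteq> {} \<and>
     (\<exists>\<phi>. C_infinity \<phi> \<and> \<Omega> = {x. \<phi> x < 0} \<and>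
          (\<forall>x. \<phi> x = 0 \<longrightarrow> frechet_derivative \<phi> (at x) \<noteq> (\<lambda>_. 0)))"

definition crit_exp :: "real \<Rightarrow> nat \<Rightarrow> real" where
  "crit_exp s N = 2 * real N / (real N - 2 * s)"

definition gagliardo :: "real \<Rightarrow> ('a::euclidean_space \<Rightarrow> real) \<Rightarrow> ennreal" where
  "gagliardo s u = (\<integral>\<^sup>+ z. ennreal (\<bar>u (fst z) - u (snd z)\<bar>\<^sup>2 /
        norm (fst z - snd z) powr (real DIM('a) + 2 * s)) \<partial>(lebesgue \<Otimes>\<^sub>M lebesgue))"

definition D0 :: "real \<Rightarrow> ('a::euclidean_space) set \<Rightarrow> ('a \<Rightarrow> real) set" where
  "D0 s \<Omega> = {u. u \<in> borel_measurable lebesgue \<and>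
       integrable lebesgue (\<lambda>x. \<bar>u x\<bar> powr crit_exp s DIM('a)) \<and>
       gagliardo s u < \<infinity> \<and> (\<forall>x. x \<notin> \<Omega> \<longrightarrow> u x = 0)}"

definition Lq_pow :: "('a::euclidean_space) set \<Rightarrow> real \<Rightarrow> ('a \<Rightarrow> real) \<Rightarrow> real" where
  "Lq_pow \<Omega> q u = (LINT x:\<Omega>|lebesgue. \<bar>u x\<bar> powr q)"

definition norm_sq :: "real \<Rightarrow> ('a::euclidean_space) set \<Rightarrow> ('a \<Rightarrow> real) \<Rightarrow> real" where
  "norm_sq s \<Omega> u = enn2real (gagliardo s u) + Lq_pow \<Omega> 2 u"

definition I_fun :: "real \<Rightarrow> ('a::euclidean_space) set \<Rightarrow> real \<Rightarrow> ('a \<Rightarrow> real) \<Rightarrow> real" where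
  "I_fun s \<Omega> p u = norm_sq s \<Omega> u / 2 - Lq_pow \<Omega> p u / p"

(* Nehari manifold; u \<noteq> 0 in the function space means: not a.e. zero *)
definition Nehari :: "real \<Rightarrow> ('a::euclidean_space) set \<Rightarrow> real \<Rightarrow> ('a \<Rightarrow> real) set" where
  "Nehari s \<Omega> p = {u \<in> D0 s \<Omega>. \<not> (AE x in lebesgue. u x = 0) \<and>
                                norm_sq s \<Omega> u = Lq_pow \<Omega> p u}"

definition nehari_level :: "real \<Rightarrow> ('a::euclidean_space) set \<Rightarrow> real \<Rightarrow> real" where
  "nehari_level s \<Omega> p = Inf (I_fun s \<Omega> p ` Nehari s \<Omega> p)"

end

theory Submission
  imports Defs
begin


lemma pow_le_bound:
  fixes a p q :: real
  assumes "0 \<le> a" "0 < p" "p \<le> q"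
  shows "a powr p \<le> 1 + a powr q"
proof (cases "a \<le> 1")
  case True
  then have "a powr p \<le> 1"
    using assms by (intro powr_le1) auto
  then show ?thesis using powr_ge_zero[of a q] by linarith
next
  case False
  then have "a powr p \<le> a powr q" using assms by (intro powr_mono) auto
  then show ?thesis by linarith
qed

lemma D0_meas: "u \<in> D0 s \<Omega> \<Longrightarrow> u \<in> borel_measurable lebesgue"
  by (simp add: D0_def)

lemma powabs_meas:
  fixes u :: "'a::euclidean_space \<Rightarrow> real" and p :: real
  assumes "u \<in> borel_measurable lebesgue"
  shows "(\<lambda>x. \<bar>u x\<bar> powr p) \<in> borel_measurable lebesgue"
  using assms by (rule measurable_abs_powr)

lemma D0_set_integrable:
  fixes \<Omega> :: "'a::euclidean_space set"
  assumes u: "u \<in> D0 s \<Omega>" and \<Omega>: "\<Omega> \<in> lmeasurable"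
    and p: "0 < p" "p \<le> crit_exp s DIM('a)"
  shows "integrable lebesgue (\<lambda>x. indicator \<Omega> x * \<bar>u x\<bar> powr p)"
proof (rule Bochner_Integration.integrable_bound[where f="\<lambda>x. indicator \<Omega> x + \<bar>u x\<bar> powr crit_exp s DIM('a) :: real"])
  have i1: "integrable lebesgue (\<lambda>x. \<bar>u x\<bar> powr crit_exp s DIM('a))"
    using u by (simp add: D0_def)
  have i2: "integrable lebesgue (indicator \<Omega> :: _ \<Rightarrow> real)"
    using \<Omega> fmeasurableD[OF \<Omega>] fmeasurableD2[OF \<Omega>] by (simp add: integrable_indicator_iff less_top)
  show "integrable lebesgue (\<lambda>x. indicator \<Omega> x + \<bar>u x\<bar> powr crit_exp s DIM('a) :: real)"
    using i1 i2 by simp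
  show "(\<lambda>x. indicator \<Omega> x * \<bar>u x\<bar> powr p) \<in> borel_measurable lebesgue"
    using powabs_meas[OF D0_meas[OF u], of p] \<Omega>
    by (intro borel_measurable_times borel_measurable_indicator) (auto simp: fmeasurable_def)
  show "AE x in lebesgue. norm (indicator \<Omega> x * \<bar>u x\<bar> powr p) \<le> norm (indicator \<Omega> x + \<bar>u x\<bar> powr crit_exp s DIM('a) :: real)"
    using pow_le_bound[of "\<bar>u _\<bar>" p "crit_exp s DIM('a)"] p
    by (auto simp: indicator_def)
qed

lemma id_leb_meas: "(\<lambda>x. x) \<in> borel_measurable (lebesgue :: 'a::euclidean_space measure)"
  by (rule measurable_completion) simp

lemma gag_meas:
  fixes u :: "'a::euclidean_space \<Rightarrow> real"
  assumes u: "u \<in> borel_measurable lebesgue"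
  shows "(\<lambda>z. ennreal (\<bar>u (fst z) - u (snd z)\<bar>\<^sup>2 /
        norm (fst z - snd z) powr (real DIM('a) + 2 * s))) \<in> borel_measurable (lebesgue \<Otimes>\<^sub>M lebesgue)"
proof -
  have f: "(\<lambda>z. fst z) \<in> borel_measurable (lebesgue \<Otimes>\<^sub>M (lebesgue :: 'a measure))"
    by (rule measurable_compose[OF measurable_fst id_leb_meas])
  have s: "(\<lambda>z. snd z) \<in> borel_measurable (lebesgue \<Otimes>\<^sub>M (lebesgue :: 'a measure))"
    by (rule measurable_compose[OF measurable_snd id_leb_meas])
  have uf: "(\<lambda>z. u (fst z)) \<in> borel_measurable (lebesgue \<Otimes>\<^sub>M (lebesgue :: 'a measure))"
    by (rule measurable_compose[OF measurable_fst u])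
  have us: "(\<lambda>z. u (snd z)) \<in> borel_measurable (lebesgue \<Otimes>\<^sub>M (lebesgue :: 'a measure))"
    by (rule measurable_compose[OF measurable_snd u])
  show ?thesis using f s uf us by measurable
qed

lemma gag_scale:
  fixes u :: "'a::euclidean_space \<Rightarrow> real"
  assumes u: "u \<in> borel_measurable lebesgue"
  shows "gagliardo s (\<lambda>x. t * u x) = ennreal (t\<^sup>2) * gagliardo s u"
proof -
  have "gagliardo s (\<lambda>x. t * u x) = (\<integral>\<^sup>+ z. ennreal (t\<^sup>2) * ennreal (\<bar>u (fst z) - u (snd z)\<bar>\<^sup>2 /
        norm (fst z - snd z) powr (real DIM('a) + 2 * s)) \<partial>(lebesgue \<Otimes>\<^sub>M lebesgue))"
    unfolding gagliardo_def
  proof (intro nn_integral_cong)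
    fix z :: "'a \<times> 'a"
    have "\<bar>t * u (fst z) - t * u (snd z)\<bar>\<^sup>2 = t\<^sup>2 * \<bar>u (fst z) - u (snd z)\<bar>\<^sup>2"
      by (simp add: power2_eq_square algebra_simps abs_mult)
    then show "ennreal (\<bar>t * u (fst z) - t * u (snd z)\<bar>\<^sup>2 / norm (fst z - snd z) powr (real DIM('a) + 2 * s)) =
      ennreal (t\<^sup>2) * ennreal (\<bar>u (fst z) - u (snd z)\<bar>\<^sup>2 / norm (fst z - snd z) powr (real DIM('a) + 2 * s))"
      by (simp add: ennreal_mult[symmetric] mult_divide_mult_cancel_left_if)
  qed
  also have "\<dots> = ennreal (t\<^sup>2) * gagliardo s u"
    unfolding gagliardo_def by (rule nn_integral_cmult[OF gag_meas[OF u]])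
  finally show ?thesis .
qed

lemma Lq_scale:
  fixes u :: "'a::euclidean_space \<Rightarrow> real"
  assumes "t > 0"
  shows "Lq_pow \<Omega> p (\<lambda>x. t * u x) = t powr p * Lq_pow \<Omega> p u"
proof -
  have "Lq_pow \<Omega> p (\<lambda>x. t * u x) = (LINT x:\<Omega>|lebesgue. t powr p * \<bar>u x\<bar> powr p)"
    unfolding Lq_pow_def using assms by (simp add: abs_mult powr_mult)
  also have "\<dots> = t powr p * Lq_pow \<Omega> p u"
    unfolding Lq_pow_def by (rule set_integral_mult_right)
  finally show ?thesis .
qed

lemma D0_scale:
  fixes u :: "'a::euclidean_space \<Rightarrow> real"
  assumes u: "u \<in> D0 s \<Omega>" and t: "t > 0"
  shows "(\<lambda>x. t * u x) \<in> D0 s \<Omega>"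
proof -
  have m: "u \<in> borel_measurable lebesgue" using u by (simp add: D0_def)
  have i: "integrable lebesgue (\<lambda>x. \<bar>u x\<bar> powr crit_exp s DIM('a))" using u by (simp add: D0_def)
  have "integrable lebesgue (\<lambda>x. t powr crit_exp s DIM('a) * \<bar>u x\<bar> powr crit_exp s DIM('a))"
    using i by simp
  then have "integrable lebesgue (\<lambda>x. \<bar>t * u x\<bar> powr crit_exp s DIM('a))"
    using t by (simp add: abs_mult powr_mult)
  moreover have "gagliardo s (\<lambda>x. t * u x) < \<infinity>"
    using u gag_scale[OF m, of s t] by (simp add: D0_def ennreal_mult_less_top)
  ultimately show ?thesis using u m by (simp add: D0_def)
qed

lemma norm_sq_scale:
  fixes u :: "'a::euclidean_space \<Rightarrow> real"
  assumes u: "u \<in> D0 s \<Omega>" and t: "t > 0"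
  shows "norm_sq s \<Omega> (\<lambda>x. t * u x) = t\<^sup>2 * norm_sq s \<Omega> u"
proof -
  have m: "u \<in> borel_measurable lebesgue" using u by (simp add: D0_def)
  have "enn2real (gagliardo s (\<lambda>x. t * u x)) = t\<^sup>2 * enn2real (gagliardo s u)"
    using gag_scale[OF m, of s t] by (simp add: enn2real_mult)
  moreover have "Lq_pow \<Omega> 2 (\<lambda>x. t * u x) = t\<^sup>2 * Lq_pow \<Omega> 2 u"
    using Lq_scale[OF t, of \<Omega> 2 u] t by (simp add: powr_numeral)
  ultimately show ?thesis unfolding norm_sq_def by (simp add: algebra_simps)
qed

lemma Lq_pow_alt: "Lq_pow \<Omega> p u = integral\<^sup>L lebesgue (\<lambda>x. indicator \<Omega> x * \<bar>u x\<bar> powr p)"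
  unfolding Lq_pow_def set_lebesgue_integral_def by simp

lemma Lq_pos:
  fixes \<Omega> :: "'a::euclidean_space set"
  assumes u: "u \<in> D0 s \<Omega>" and nz: "\<not> (AE x in lebesgue. u x = 0)" and \<Omega>: "\<Omega> \<in> lmeasurable"
    and p: "0 < p" "p \<le> crit_exp s DIM('a)"
  shows "Lq_pow \<Omega> p u > 0"
proof -
  have int: "integrable lebesgue (\<lambda>x. indicator \<Omega> x * \<bar>u x\<bar> powr p)"
    by (rule D0_set_integrable[OF u \<Omega> p])
  have nn: "AE x in lebesgue. 0 \<le> indicator \<Omega> x * \<bar>u x\<bar> powr p" by simp
  have ge: "Lq_pow \<Omega> p u \<ge> 0" unfolding Lq_pow_alt by (rule integral_nonneg_AE[OF nn])
  have "Lq_pow \<Omega> p u \<noteq> 0"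
  proof
    assume "Lq_pow \<Omega> p u = 0"
    then have "AE x in lebesgue. indicator \<Omega> x * \<bar>u x\<bar> powr p = 0"
      using integral_nonneg_eq_0_iff_AE[OF int nn] unfolding Lq_pow_alt by simp
    moreover have "\<forall>x. x \<notin> \<Omega> \<longrightarrow> u x = 0" using u by (simp add: D0_def)
    ultimately have "AE x in lebesgue. u x = 0"
      by (auto elim!: eventually_mono simp: indicator_def split: if_splits)
    with nz show False by simp
  qed
  with ge show ?thesis by simp
qed

lemma norm_sq_pos:
  fixes \<Omega> :: "'a::euclidean_space set"
  assumes u: "u \<in> D0 s \<Omega>" and nz: "\<not> (AE x in lebesgue. u x = 0)" and \<Omega>: "\<Omega> \<in> lmeasurable"
    and q: "2 \<le> crit_exp s DIM('a)"
  shows "norm_sq s \<Omega> u > 0"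
  using Lq_pos[OF u nz \<Omega>, of 2] q unfolding norm_sq_def
  by (simp add: add_nonneg_pos)

definition Uset :: "real \<Rightarrow> ('a::euclidean_space) set \<Rightarrow> ('a \<Rightarrow> real) set" where
  "Uset s \<Omega> = {u \<in> D0 s \<Omega>. \<not> (AE x in lebesgue. u x = 0)}"

definition Rq :: "real \<Rightarrow> ('a::euclidean_space) set \<Rightarrow> real \<Rightarrow> ('a \<Rightarrow> real) \<Rightarrow> real" where
  "Rq s \<Omega> p u = norm_sq s \<Omega> u / Lq_pow \<Omega> p u powr (2/p)"

definition Sinf :: "real \<Rightarrow> ('a::euclidean_space) set \<Rightarrow> real \<Rightarrow> real" where
  "Sinf s \<Omega> p = Inf (Rq s \<Omega> p ` Uset s \<Omega>)"

lemma Nehari_sub: "Nehari s \<Omega> p \<subseteq> Uset s \<Omega>"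
  unfolding Nehari_def Uset_def by auto

lemma Rq_pos:
  fixes \<Omega> :: "'a::euclidean_space set"
  assumes u: "u \<in> Uset s \<Omega>" and \<Omega>: "\<Omega> \<in> lmeasurable"
    and p: "2 \<le> p" "p \<le> crit_exp s DIM('a)"
  shows "Rq s \<Omega> p u > 0"
  using norm_sq_pos[of u s \<Omega>] Lq_pos[of u s \<Omega> p] u \<Omega> p unfolding Rq_def Uset_def by auto

lemma nehari_I:
  fixes \<Omega> :: "'a::euclidean_space set"
  assumes u: "u \<in> Nehari s \<Omega> p" and \<Omega>: "\<Omega> \<in> lmeasurable"
    and p: "2 < p" "p \<le> crit_exp s DIM('a)"
  shows "I_fun s \<Omega> p u = (1/2 - 1/p) * Rq s \<Omega> p u powr (p/(p-2))"
proof -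
  define A where "A = norm_sq s \<Omega> u"
  have uD: "u \<in> D0 s \<Omega>" "\<not> (AE x in lebesgue. u x = 0)" using u by (auto simp: Nehari_def)
  have A: "A > 0" unfolding A_def using norm_sq_pos[OF uD \<Omega>] p by simp
  have B: "Lq_pow \<Omega> p u = A" using u by (simp add: Nehari_def A_def)
  have "Rq s \<Omega> p u = A powr (1 - 2/p)"
    unfolding Rq_def B A_def[symmetric] using A by (simp add: powr_diff)
  then have "Rq s \<Omega> p u powr (p/(p-2)) = A powr ((1 - 2/p) * (p/(p-2)))"
    by (simp add: powr_powr)
  also have "(1 - 2/p) * (p/(p-2)) = 1" using p by (simp add: field_simps)
  finally have "Rq s \<Omega> p u powr (p/(p-2)) = A" using A by simp
  then show ?thesis unfolding I_fun_def B A_def[symmetric] by (simp add: algebra_simps)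
qed

lemma Rq_scale:
  fixes \<Omega> :: "'a::euclidean_space set"
  assumes u: "u \<in> D0 s \<Omega>" and t: "t > 0" and p: "p > 0"
  shows "Rq s \<Omega> p (\<lambda>x. t * u x) = Rq s \<Omega> p u"
proof -
  have B: "Lq_pow \<Omega> p u \<ge> 0" unfolding Lq_pow_alt by (rule integral_nonneg_AE) simp
  have "(t powr p * Lq_pow \<Omega> p u) powr (2/p) = (t powr p) powr (2/p) * Lq_pow \<Omega> p u powr (2/p)"
    using B t by (simp add: powr_mult)
  also have "(t powr p) powr (2/p) = t\<^sup>2" using t p by (simp add: powr_powr powr_numeral)
  finally show ?thesis unfolding Rq_def norm_sq_scale[OF u t] Lq_scale[OF t]
    using t by simp
qed

lemma nehari_rep:
  fixes \<Omega> :: "'a::euclidean_space set"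
  assumes u: "u \<in> Uset s \<Omega>" and \<Omega>: "\<Omega> \<in> lmeasurable"
    and p: "2 < p" "p \<le> crit_exp s DIM('a)"
  shows "\<exists>v \<in> Nehari s \<Omega> p. I_fun s \<Omega> p v = (1/2 - 1/p) * Rq s \<Omega> p u powr (p/(p-2))"
proof -
  have uD: "u \<in> D0 s \<Omega>" "\<not> (AE x in lebesgue. u x = 0)" using u by (auto simp: Uset_def)
  define A where "A = norm_sq s \<Omega> u"
  define B where "B = Lq_pow \<Omega> p u"
  have A: "A > 0" unfolding A_def using norm_sq_pos[OF uD \<Omega>] p by simp
  have B: "B > 0" unfolding B_def using Lq_pos[OF uD \<Omega>] p by simp
  define t where "t = (A/B) powr (1/(p-2))"
  have t: "t > 0" using A B by (simp add: t_def)
  have tp: "t powr (p-2) = A/B" using A B p by (simp add: t_def powr_powr)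
  have "t powr p = t powr ((p-2) + 2)" by simp
  also have "\<dots> = t powr (p-2) * t powr 2" by (rule powr_add)
  finally have "t powr p = t powr (p-2) * t powr 2" .
  then have tp2: "t powr p * B = t\<^sup>2 * A" using tp B t by (simp add: powr_numeral)
  define v where "v = (\<lambda>x. t * u x)"
  have vD: "v \<in> D0 s \<Omega>" unfolding v_def by (rule D0_scale[OF uD(1) t])
  have vnz: "\<not> (AE x in lebesgue. v x = 0)"
  proof
    assume "AE x in lebesgue. v x = 0"
    then have "AE x in lebesgue. u x = 0" using t by (auto simp: v_def elim!: eventually_mono)
    with uD show False by simp
  qed
  have "norm_sq s \<Omega> v = Lq_pow \<Omega> p v"
    unfolding v_def norm_sq_scale[OF uD(1) t] Lq_scale[OF t] A_def[symmetric] B_def[symmetric] tp2 ..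
  then have vN: "v \<in> Nehari s \<Omega> p" using vD vnz by (simp add: Nehari_def)
  have "I_fun s \<Omega> p v = (1/2 - 1/p) * Rq s \<Omega> p v powr (p/(p-2))"
    by (rule nehari_I[OF vN \<Omega> p])
  also have "Rq s \<Omega> p v = Rq s \<Omega> p u" unfolding v_def using Rq_scale[OF uD(1) t] p by simp
  finally show ?thesis using vN by blast
qed

lemma Sinf_nonneg:
  fixes \<Omega> :: "'a::euclidean_space set"
  assumes ne: "Uset s \<Omega> \<noteq> {}" and \<Omega>: "\<Omega> \<in> lmeasurable"
    and p: "2 \<le> p" "p \<le> crit_exp s DIM('a)"
  shows "Sinf s \<Omega> p \<ge> 0"
  unfolding Sinf_def using ne Rq_pos[OF _ \<Omega> p] by (intro cInf_greatest) (auto intro: less_imp_le)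

lemma bdd_Rq:
  fixes \<Omega> :: "'a::euclidean_space set"
  assumes \<Omega>: "\<Omega> \<in> lmeasurable" and p: "2 \<le> p" "p \<le> crit_exp s DIM('a)"
  shows "bdd_below (Rq s \<Omega> p ` Uset s \<Omega>)"
  using Rq_pos[OF _ \<Omega> p] by (intro bdd_belowI[where m=0]) (auto intro: less_imp_le)

lemma level_eq:
  fixes \<Omega> :: "'a::euclidean_space set"
  assumes ne: "Uset s \<Omega> \<noteq> {}" and \<Omega>: "\<Omega> \<in> lmeasurable"
    and p: "2 < p" "p \<le> crit_exp s DIM('a)"
  shows "nehari_level s \<Omega> p = (1/2 - 1/p) * Sinf s \<Omega> p powr (p/(p-2))"
proof -
  define c where "c = 1/2 - 1/p"
  define e where "e = p/(p-2)"
  have c: "c \<ge> 0" using p by (simp add: c_def field_simps)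
  have e: "e > 0" using p by (simp add: e_def)
  define f where "f = (\<lambda>x::real. c * max x 0 powr e)"
  have mono: "mono f" unfolding f_def
    by (intro monoI mult_left_mono c powr_mono2) (auto simp: e less_imp_le)
  have cont: "isCont f x" for x
  proof -
    have "((\<lambda>y. max y 0 powr e) \<longlongrightarrow> max x 0 powr e) (at x)"
    proof (rule tendsto_powr')
      show "((\<lambda>y. max y 0) \<longlongrightarrow> max x 0) (at x)" by (intro tendsto_max tendsto_ident_at tendsto_const)
      show "((\<lambda>y. e) \<longlongrightarrow> e) (at x)" by (rule tendsto_const)
      have "eventually (\<lambda>y. 0 \<le> max y (0::real)) (at x)" by (intro always_eventually) simp
      then show "max x 0 \<noteq> 0 \<or> (e > 0 \<and> eventually (\<lambda>y. 0 \<le> max y (0::real)) (at x))" using e by blast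
    qed
    then show ?thesis unfolding f_def isCont_def by (intro tendsto_mult tendsto_const)
  qed
  let ?X = "Rq s \<Omega> p ` Uset s \<Omega>"
  have "f (Inf ?X) = Inf (f ` ?X)"
    by (rule continuous_at_Inf_mono[OF mono])
       (use cont ne bdd_Rq[OF \<Omega>] p in \<open>auto intro: continuous_at_imp_continuous_at_within\<close>)
  moreover have "f ` ?X = I_fun s \<Omega> p ` Nehari s \<Omega> p"
  proof safe
    fix u assume u: "u \<in> Uset s \<Omega>"
    then have "f (Rq s \<Omega> p u) = c * Rq s \<Omega> p u powr e"
      using Rq_pos[OF u \<Omega>] p by (simp add: f_def)
    then show "f (Rq s \<Omega> p u) \<in> I_fun s \<Omega> p ` Nehari s \<Omega> p"
      using nehari_rep[OF u \<Omega> p] unfolding c_def e_def by force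
  next
    fix v assume v: "v \<in> Nehari s \<Omega> p"
    then have vU: "v \<in> Uset s \<Omega>" using Nehari_sub by blast
    have "I_fun s \<Omega> p v = f (Rq s \<Omega> p v)"
      using nehari_I[OF v \<Omega> p] Rq_pos[OF vU \<Omega>] p by (simp add: f_def c_def e_def)
    then show "I_fun s \<Omega> p v \<in> f ` ?X" using vU by blast
  qed
  moreover have "f (Inf ?X) = c * Sinf s \<Omega> p powr e"
    using Sinf_nonneg[OF ne \<Omega>] p by (simp add: f_def Sinf_def)
  ultimately show ?thesis unfolding nehari_level_def c_def e_def by simp
qed

lemma young_pt:
  fixes a M th q :: real
  assumes a: "a \<ge> 0" and M: "M > 0" and th: "0 < th" "th \<le> 1" and q: "q > 0"
  shows "a powr (th * q) \<le> M powr th * (th / M * a powr q + (1 - th))"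
proof (cases "a = 0")
  case True
  then show ?thesis using M th by simp
next
  case False
  then have a0: "a > 0" using a by simp
  define x where "x = a powr q / M"
  have x: "x > 0" using a0 M by (simp add: x_def)
  have "a powr (th * q) = (M * x) powr th"
    using M a0 by (simp add: x_def powr_powr mult.commute)
  also have "\<dots> = M powr th * (x powr th * 1 powr (1 - th))"
    using M x by (simp add: powr_mult)
  also have "\<dots> \<le> M powr th * (th * x + (1 - th) * 1)"
    by (intro mult_left_mono Youngs_inequality_0) (use th x in auto)
  finally show ?thesis by (simp add: x_def)
qed

lemma holder:
  fixes \<Omega> :: "'a::euclidean_space set"
  assumes u: "u \<in> D0 s \<Omega>" and nz: "\<not> (AE x in lebesgue. u x = 0)" and \<Omega>: "\<Omega> \<in> lmeasurable"
    and mu: "measure lebesgue \<Omega> > 0"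
    and p: "0 < p" "p \<le> crit_exp s DIM('a)"
  shows "Lq_pow \<Omega> p u \<le> measure lebesgue \<Omega> powr (1 - p / crit_exp s DIM('a)) *
           Lq_pow \<Omega> (crit_exp s DIM('a)) u powr (p / crit_exp s DIM('a))"
proof -
  define q where "q = crit_exp s DIM('a)"
  define \<mu> where "\<mu> = measure lebesgue \<Omega>"
  define th where "th = p / q"
  have q: "q > 0" using p by (simp add: q_def)
  have th: "0 < th" "th \<le> 1" using p q by (auto simp: th_def q_def field_simps)
  have pth: "p = th * q" using q by (simp add: th_def)
  define Bq where "Bq = Lq_pow \<Omega> q u"
  have Bq: "Bq > 0" unfolding Bq_def q_def by (rule Lq_pos[OF u nz \<Omega>]) (use q in \<open>auto simp: q_def\<close>)
  define M where "M = Bq / \<mu>"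
  have M: "M > 0" using Bq mu by (simp add: M_def \<mu>_def)
  have ip: "integrable lebesgue (\<lambda>x. indicator \<Omega> x * \<bar>u x\<bar> powr p)"
    by (rule D0_set_integrable[OF u \<Omega> p])
  have iq: "integrable lebesgue (\<lambda>x. indicator \<Omega> x * \<bar>u x\<bar> powr q)"
    by (rule D0_set_integrable[OF u \<Omega>]) (use q in \<open>auto simp: q_def\<close>)
  have ii: "integrable lebesgue (indicator \<Omega> :: _ \<Rightarrow> real)"
    using \<Omega> fmeasurableD[OF \<Omega>] fmeasurableD2[OF \<Omega>] by (simp add: integrable_indicator_iff less_top)
  have "Lq_pow \<Omega> p u \<le> integral\<^sup>L lebesgue (\<lambda>x. M powr th * (th / M) * (indicator \<Omega> x * \<bar>u x\<bar> powr q)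
                  + M powr th * (1 - th) * indicator \<Omega> x)"
    unfolding Lq_pow_alt
  proof (rule integral_mono[OF ip])
    show "integrable lebesgue (\<lambda>x. M powr th * (th / M) * (indicator \<Omega> x * \<bar>u x\<bar> powr q)
                  + M powr th * (1 - th) * indicator \<Omega> x)"
      using iq ii by simp
    fix x
    show "indicator \<Omega> x * \<bar>u x\<bar> powr p \<le> M powr th * (th / M) * (indicator \<Omega> x * \<bar>u x\<bar> powr q)
                  + M powr th * (1 - th) * indicator \<Omega> x"
      using young_pt[of "\<bar>u x\<bar>" M th q] M th q unfolding pth
      by (auto simp: indicator_def algebra_simps)
  qed
  also have "\<dots> = M powr th * (th / M) * Bq + M powr th * (1 - th) * \<mu>"
    using iq ii by (simp add: Bq_def Lq_pow_alt \<mu>_def)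
  also have "\<dots> = M powr th * \<mu>"
    using M mu by (simp add: M_def \<mu>_def field_simps)
  also have "\<dots> = \<mu> powr (1 - th) * Bq powr th"
    using Bq mu by (simp add: M_def \<mu>_def powr_divide powr_diff field_simps)
  finally show ?thesis by (simp add: \<mu>_def th_def Bq_def q_def)
qed

lemma Rq_lower:
  fixes \<Omega> :: "'a::euclidean_space set"
  assumes u: "u \<in> Uset s \<Omega>" and \<Omega>: "\<Omega> \<in> lmeasurable"
    and mu: "measure lebesgue \<Omega> > 0"
    and p: "2 \<le> p" "p \<le> crit_exp s DIM('a)"
  shows "Rq s \<Omega> p u \<ge> measure lebesgue \<Omega> powr (-(2/p - 2/crit_exp s DIM('a))) * Rq s \<Omega> (crit_exp s DIM('a)) u"
proof -
  define q where "q = crit_exp s DIM('a)"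
  define \<mu> where "\<mu> = measure lebesgue \<Omega>"
  have uD: "u \<in> D0 s \<Omega>" "\<not> (AE x in lebesgue. u x = 0)" using u by (auto simp: Uset_def)
  have q: "q \<ge> 2" using p by (simp add: q_def)
  define A where "A = norm_sq s \<Omega> u"
  have A: "A > 0" unfolding A_def using norm_sq_pos[OF uD \<Omega>] p by simp
  define Bp where "Bp = Lq_pow \<Omega> p u"
  define Bq where "Bq = Lq_pow \<Omega> q u"
  have Bp: "Bp > 0" unfolding Bp_def using Lq_pos[OF uD \<Omega>] p by simp
  have Bq: "Bq > 0" unfolding Bq_def q_def using Lq_pos[OF uD \<Omega>] p by simp
  have h: "Bp \<le> \<mu> powr (1 - p/q) * Bq powr (p/q)"
    unfolding Bp_def Bq_def \<mu>_def q_def by (rule holder[OF uD \<Omega> mu]) (use p in auto)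
  have "Bp powr (2/p) \<le> (\<mu> powr (1 - p/q) * Bq powr (p/q)) powr (2/p)"
    using h Bp p by (intro powr_mono2) auto
  also have "\<dots> = \<mu> powr ((1 - p/q) * (2/p)) * Bq powr ((p/q) * (2/p))"
    using mu Bq by (simp add: powr_mult powr_powr \<mu>_def)
  also have "(1 - p/q) * (2/p) = 2/p - 2/q" using p q by (simp add: field_simps)
  also have "(p/q) * (2/p) = 2/q" using p q by (simp add: field_simps)
  finally have le: "Bp powr (2/p) \<le> \<mu> powr (2/p - 2/q) * Bq powr (2/q)" .
  have "A / (\<mu> powr (2/p - 2/q) * Bq powr (2/q)) \<le> A / Bp powr (2/p)"
    using le A Bp Bq mu by (intro divide_left_mono) (auto simp: \<mu>_def)
  moreover have "A / (\<mu> powr (2/p - 2/q) * Bq powr (2/q)) = \<mu> powr (-(2/p - 2/q)) * (A / Bq powr (2/q))"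
  proof -
    define c where "c = 2/p - 2/q"
    have "\<mu> powr (-c) = 1 / \<mu> powr c" by (simp add: powr_minus_divide)
    moreover have "\<mu> powr c > 0" using mu by (simp add: \<mu>_def)
    ultimately show ?thesis unfolding c_def[symmetric] using Bq by (simp add: field_simps)
  qed
  ultimately show ?thesis
    unfolding Rq_def A_def Bp_def Bq_def \<mu>_def q_def by simp
qed

lemma Sinf_lower:
  fixes \<Omega> :: "'a::euclidean_space set"
  assumes ne: "Uset s \<Omega> \<noteq> {}" and \<Omega>: "\<Omega> \<in> lmeasurable"
    and mu: "measure lebesgue \<Omega> > 0"
    and p: "2 \<le> p" "p \<le> crit_exp s DIM('a)"
  shows "Sinf s \<Omega> p \<ge> measure lebesgue \<Omega> powr (-(2/p - 2/crit_exp s DIM('a))) * Sinf s \<Omega> (crit_exp s DIM('a))"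
  unfolding Sinf_def
proof (rule cInf_greatest)
  show "Rq s \<Omega> p ` Uset s \<Omega> \<noteq> {}" using ne by simp
  fix y assume "y \<in> Rq s \<Omega> p ` Uset s \<Omega>"
  then obtain u where u: "u \<in> Uset s \<Omega>" and y: "y = Rq s \<Omega> p u" by auto
  have "Inf (Rq s \<Omega> (crit_exp s DIM('a)) ` Uset s \<Omega>) \<le> Rq s \<Omega> (crit_exp s DIM('a)) u"
    by (rule cInf_lower) (use u bdd_Rq[OF \<Omega>, of "crit_exp s DIM('a)"] p in auto)
  then have "measure lebesgue \<Omega> powr (-(2/p - 2/crit_exp s DIM('a))) * Inf (Rq s \<Omega> (crit_exp s DIM('a)) ` Uset s \<Omega>)
     \<le> measure lebesgue \<Omega> powr (-(2/p - 2/crit_exp s DIM('a))) * Rq s \<Omega> (crit_exp s DIM('a)) u"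
    by (intro mult_left_mono) auto
  also have "\<dots> \<le> y" unfolding y by (rule Rq_lower[OF u \<Omega> mu p])
  finally show "measure lebesgue \<Omega> powr (-(2/p - 2/crit_exp s DIM('a))) * Inf (Rq s \<Omega> (crit_exp s DIM('a)) ` Uset s \<Omega>) \<le> y" .
qed

lemma Lq_cont:
  fixes \<Omega> :: "'a::euclidean_space set"
  assumes u: "u \<in> D0 s \<Omega>" and \<Omega>: "\<Omega> \<in> lmeasurable" and q: "crit_exp s DIM('a) > 0"
  shows "((\<lambda>p. Lq_pow \<Omega> p u) \<longlongrightarrow> Lq_pow \<Omega> (crit_exp s DIM('a)) u) (at_left (crit_exp s DIM('a)))"
proof (rule tendsto_at_left_sequentially[OF q])
  define q where "q = crit_exp s DIM('a)"
  fix S :: "nat \<Rightarrow> real"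
  assume S: "\<And>n. S n < crit_exp s DIM('a)" "\<And>n. 0 < S n" "S \<longlonglongrightarrow> crit_exp s DIM('a)"
  have iq: "integrable lebesgue (\<lambda>x. indicator \<Omega> x * \<bar>u x\<bar> powr q)"
    by (rule D0_set_integrable[OF u \<Omega>]) (use q in \<open>auto simp: q_def\<close>)
  have ii: "integrable lebesgue (indicator \<Omega> :: _ \<Rightarrow> real)"
    using \<Omega> fmeasurableD[OF \<Omega>] fmeasurableD2[OF \<Omega>] by (simp add: integrable_indicator_iff less_top)
  have m: "u \<in> borel_measurable lebesgue" using u by (simp add: D0_def)
  have mO: "\<Omega> \<in> sets lebesgue" using fmeasurableD[OF \<Omega>] .
  have "(\<lambda>n. integral\<^sup>L lebesgue (\<lambda>x. indicator \<Omega> x * \<bar>u x\<bar> powr S n)) \<longlonglongrightarrow>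
        integral\<^sup>L lebesgue (\<lambda>x. indicator \<Omega> x * \<bar>u x\<bar> powr q)"
  proof (rule integral_dominated_convergence[where w="\<lambda>x. indicator \<Omega> x + indicator \<Omega> x * \<bar>u x\<bar> powr q"])
    show "(\<lambda>x. indicator \<Omega> x * \<bar>u x\<bar> powr q) \<in> borel_measurable lebesgue"
      using iq by (rule borel_measurable_integrable)
    show "(\<lambda>x. indicator \<Omega> x * \<bar>u x\<bar> powr S n) \<in> borel_measurable lebesgue" for n
      using powabs_meas[OF m, of "S n"] mO
      by (intro borel_measurable_times borel_measurable_indicator) auto
    show "integrable lebesgue (\<lambda>x. indicator \<Omega> x + indicator \<Omega> x * \<bar>u x\<bar> powr q)"
      using iq ii by simp
    show "AE x in lebesgue. (\<lambda>n. indicator \<Omega> x * \<bar>u x\<bar> powr S n) \<longlonglongrightarrow> indicator \<Omega> x * \<bar>u x\<bar> powr q"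
    proof (intro AE_I2)
      fix x
      show "(\<lambda>n. indicator \<Omega> x * \<bar>u x\<bar> powr S n) \<longlonglongrightarrow> indicator \<Omega> x * \<bar>u x\<bar> powr q"
      proof (cases "u x = 0")
        case True then show ?thesis by simp
      next
        case False
        have "(\<lambda>n. \<bar>u x\<bar> powr S n) \<longlonglongrightarrow> \<bar>u x\<bar> powr q"
          by (rule tendsto_powr') (use False S(3) in \<open>auto simp: q_def\<close>)
        then show ?thesis by (intro tendsto_mult tendsto_const)
      qed
    qed
    show "AE x in lebesgue. norm (indicator \<Omega> x * \<bar>u x\<bar> powr S n) \<le> indicator \<Omega> x + indicator \<Omega> x * \<bar>u x\<bar> powr q" for n
      using pow_le_bound[of "\<bar>u _\<bar>" "S n" q] S(1,2)[of n]
      by (intro AE_I2) (auto simp: indicator_def q_def less_imp_le)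
  qed
  then show "(\<lambda>n. Lq_pow \<Omega> (S n) u) \<longlonglongrightarrow> Lq_pow \<Omega> (crit_exp s DIM('a)) u"
    by (simp add: Lq_pow_alt q_def)
qed

lemma main_gen:
  fixes \<Omega> :: "'a::euclidean_space set"
  assumes s: "0 < s" and N: "real DIM('a) > 2 * s" and op: "open \<Omega>" and bd: "bounded \<Omega>"
  shows "((\<lambda>p. nehari_level s \<Omega> p) \<longlongrightarrow> nehari_level s \<Omega> (crit_exp s DIM('a))) (at_left (crit_exp s DIM('a)))"
proof -
  define q where "q = crit_exp s DIM('a)"
  have q2: "q > 2" using s N by (simp add: q_def crit_exp_def field_simps)
  have \<Omega>: "\<Omega> \<in> lmeasurable" by (rule lmeasurable_open[OF bd op])
  have evp: "eventually (\<lambda>p. p \<in> {2<..<q}) (at_left q)" by (rule eventually_at_left_real[OF q2])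
  show ?thesis
  proof (cases "Uset s \<Omega> = {}")
    case True
    then have "Nehari s \<Omega> p = {}" for p using Nehari_sub[of s \<Omega> p] by blast
    then have "nehari_level s \<Omega> p = Inf {}" for p by (simp add: nehari_level_def)
    then show ?thesis by simp
  next
    case False
    note ne = False
    then obtain u0 where u0: "u0 \<in> Uset s \<Omega>" by auto
    have mu: "measure lebesgue \<Omega> > 0"
    proof (rule ccontr)
      assume "\<not> measure lebesgue \<Omega> > 0"
      then have "measure lebesgue \<Omega> = 0" using measure_nonneg[of lebesgue \<Omega>] by linarith
      then have "\<Omega> \<in> null_sets lebesgue"
        using fmeasurableD[OF \<Omega>] emeasure_eq_measure2[OF \<Omega>] by (simp add: null_sets_def)
      then have "AE x in lebesgue. x \<notin> \<Omega>" by (rule AE_not_in)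
      moreover have "\<forall>x. x \<notin> \<Omega> \<longrightarrow> u0 x = 0" using u0 by (simp add: Uset_def D0_def)
      ultimately have "AE x in lebesgue. u0 x = 0" by (auto elim!: eventually_mono)
      with u0 show False by (simp add: Uset_def)
    qed
    define \<mu> where "\<mu> = measure lebesgue \<Omega>"
    have Sconv: "((\<lambda>p. Sinf s \<Omega> p) \<longlongrightarrow> Sinf s \<Omega> q) (at_left q)"
    proof (rule order_tendstoI)
      fix a assume a: "a < Sinf s \<Omega> q"
      have "((\<lambda>p. \<mu> powr (-(2/p - 2/q)) * Sinf s \<Omega> q) \<longlongrightarrow> \<mu> powr (-(2/q - 2/q)) * Sinf s \<Omega> q) (at_left q)"
        using mu q2 by (intro tendsto_mult tendsto_const tendsto_powr' tendsto_minus tendsto_diff tendsto_divide tendsto_ident_at)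
                       (auto simp: \<mu>_def)
      then have "((\<lambda>p. \<mu> powr (-(2/p - 2/q)) * Sinf s \<Omega> q) \<longlongrightarrow> Sinf s \<Omega> q) (at_left q)" using mu by (simp add: \<mu>_def)
      then have "eventually (\<lambda>p. a < \<mu> powr (-(2/p - 2/q)) * Sinf s \<Omega> q) (at_left q)"
        using a by (rule order_tendstoD)
      then show "eventually (\<lambda>p. a < Sinf s \<Omega> p) (at_left q)"
        using evp
      proof eventually_elim
        case (elim p)
        then show ?case using Sinf_lower[OF ne \<Omega> mu, of p] by (auto simp: q_def \<mu>_def)
      qed
    next
      fix a assume a: "Sinf s \<Omega> q < a"
      then obtain u where u: "u \<in> Uset s \<Omega>" and ua: "Rq s \<Omega> q u < a"
        unfolding Sinf_def using cInf_less_iff[OF _ bdd_Rq[OF \<Omega>, of q]] ne q2 by (auto simp: q_def)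
      have uD: "u \<in> D0 s \<Omega>" "\<not> (AE x in lebesgue. u x = 0)" using u by (auto simp: Uset_def)
      have Bq: "Lq_pow \<Omega> q u > 0" using Lq_pos[OF uD \<Omega>, of q] q2 by (simp add: q_def)
      have "((\<lambda>p. Lq_pow \<Omega> p u) \<longlongrightarrow> Lq_pow \<Omega> q u) (at_left q)"
        using Lq_cont[OF uD(1) \<Omega>] q2 by (simp add: q_def)
      then have "((\<lambda>p. Rq s \<Omega> p u) \<longlongrightarrow> Rq s \<Omega> q u) (at_left q)"
        unfolding Rq_def using Bq q2
        by (intro tendsto_divide tendsto_const tendsto_powr' tendsto_ident_at) auto
      then have "eventually (\<lambda>p. Rq s \<Omega> p u < a) (at_left q)"
        using ua by (rule order_tendstoD)
      then show "eventually (\<lambda>p. Sinf s \<Omega> p < a) (at_left q)"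
        using evp
      proof eventually_elim
        case (elim p)
        have "Sinf s \<Omega> p \<le> Rq s \<Omega> p u"
          unfolding Sinf_def by (rule cInf_lower) (use u bdd_Rq[OF \<Omega>, of p] elim in \<open>auto simp: q_def\<close>)
        then show ?case using elim by simp
      qed
    qed
    have lim: "((\<lambda>p. (1/2 - 1/p) * Sinf s \<Omega> p powr (p/(p-2))) \<longlongrightarrow> (1/2 - 1/q) * Sinf s \<Omega> q powr (q/(q-2))) (at_left q)"
    proof (intro tendsto_mult tendsto_diff tendsto_const tendsto_divide tendsto_ident_at tendsto_powr' Sconv)
      show "q \<noteq> 0" "q - 2 \<noteq> 0" using q2 by auto
      have "eventually (\<lambda>p. 0 \<le> Sinf s \<Omega> p) (at_left q)"
        using evp by eventually_elim (use Sinf_nonneg[OF ne \<Omega>] in \<open>auto simp: q_def\<close>)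
      then show "Sinf s \<Omega> q \<noteq> 0 \<or> 0 < q / (q - 2) \<and> eventually (\<lambda>p. 0 \<le> Sinf s \<Omega> p) (at_left q)"
        using q2 by auto
    qed
    have ev: "eventually (\<lambda>p. (1/2 - 1/p) * Sinf s \<Omega> p powr (p/(p-2)) = nehari_level s \<Omega> p) (at_left q)"
      using evp by eventually_elim (use level_eq[OF ne \<Omega>] in \<open>auto simp: q_def\<close>)
    have eq: "(1/2 - 1/q) * Sinf s \<Omega> q powr (q/(q-2)) = nehari_level s \<Omega> q"
      using level_eq[OF ne \<Omega>, of q] q2 by (simp add: q_def)
    have "((\<lambda>p. nehari_level s \<Omega> p) \<longlongrightarrow> nehari_level s \<Omega> q) (at_left q)"
      using Lim_transform_eventually[OF lim ev] unfolding eq .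
    then show ?thesis unfolding q_def .
  qed
qed


theorem proposition3p4:
  fixes s :: real and \<Omega> :: "(real ^ 'n) set"
  assumes "0 < s" "s < 1"
    and "real CARD('n) > 2 * s"
    and "smooth_bounded_domain \<Omega>"
  shows "((\<lambda>p. nehari_level s \<Omega> p) \<longlongrightarrow> nehari_level s \<Omega> (crit_exp s CARD('n)))
           (at_left (crit_exp s CARD('n)))"
proof -
  have ob: "open \<Omega>" "bounded \<Omega>" using assms(4) by (auto simp: smooth_bounded_domain_def)
  have "real DIM(real ^ 'n) > 2 * s" using assms(3) by simp
  from main_gen[OF assms(1) this ob] show ?thesis by simp
qed

end
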